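(* Let $(\Omega,\mathcal A)$ be a measurable space and let $K$ be a random compact set in $\mathbb C^n$. Then the functions $(\omega,z)\mapsto\Phi_{K(\omega)}(z)$ and $(\omega,z)\mapsto V_{K(\omega)}(z)=\log\Phi_{K(\omega)}(z)$ are random functions with values in $\mathbb R\cup\{\infty\}$, i.e. for each $z\in\mathbb C^n$ the maps $\omega\mapsto\Phi_{K(\omega)}(z)$ and $\omega\mapsto V_{K(\omega)}(z)$ are measurable.
   Context: A random compact set is a measurable map from $\Omega$ to the space of non-empty compact subsets of $\mathbb C^n$ with the Hausdorff distance and its Borel $\sigma$-algebra. For non-empty compact $E\subset\mathbb C^n$, the Siciak extremal function is $\Phi_E(z)=\sup\{|p(z)|^{1/\deg p}: p \text{ polynomial on } \mathbb C^n,\ \|p\|_E\le1,\ \deg p\ge1\}$, where $\|p\|_E=\max_E|p|$, and the pluricomplex Green function is $V_E=\log\Phi_E$. *)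

theory Defs
  imports "HOL-Analysis.Analysis" "HOL-Library.Extended_Real"
begin

(* Hausdorff distance between (nonempty, bounded) subsets of a metric space *)
definition hausdist :: "'a::metric_space set \<Rightarrow> 'a set \<Rightarrow> real" where
  "hausdist A B = max (SUP a\<in>A. infdist a B) (SUP b\<in>B. infdist b A)"

definition cpt_sets :: "(complex ^ 'n::finite) set set" where
  "cpt_sets = {K. compact K \<and> K \<noteq> {}}"

definition hausdist_open_sets :: "(complex ^ 'n::finite) set set set" where
  "hausdist_open_sets = {U. U \<subseteq> cpt_sets \<and>
     (\<forall>K\<in>U. \<exists>e>0. \<forall>L\<in>cpt_sets. hausdist K L < e \<longrightarrow> L \<in> U)}"

definition cpt_space :: "(complex ^ 'n::finite) set measure" where
  "cpt_space = sigma cpt_sets hausdist_open_sets"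

(* polynomials on C^n: finitely supported coefficient functions on multi-indices *)
definition is_mpoly :: "(('n::finite \<Rightarrow> nat) \<Rightarrow> complex) \<Rightarrow> bool" where
  "is_mpoly c \<longleftrightarrow> finite {\<alpha>. c \<alpha> \<noteq> 0}"

definition mpoly_eval :: "(('n::finite \<Rightarrow> nat) \<Rightarrow> complex) \<Rightarrow> complex ^ 'n \<Rightarrow> complex" where
  "mpoly_eval c z = (\<Sum>\<alpha>\<in>{\<alpha>. c \<alpha> \<noteq> 0}. c \<alpha> * (\<Prod>i\<in>UNIV. (z $ i) ^ \<alpha> i))"

(* total degree (0 for the zero polynomial) *)
definition mpoly_deg :: "(('n::finite \<Rightarrow> nat) \<Rightarrow> complex) \<Rightarrow> nat" where
  "mpoly_deg c = Max (insert 0 ((\<lambda>\<alpha>. \<Sum>i\<in>UNIV. \<alpha> i) ` {\<alpha>. c \<alpha> \<noteq> 0}))"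

definition sup_norm_on :: "(complex ^ 'n::finite) set \<Rightarrow> (('n \<Rightarrow> nat) \<Rightarrow> complex) \<Rightarrow> real" where
  "sup_norm_on E c = (SUP x\<in>E. norm (mpoly_eval c x))"

definition siciak :: "(complex ^ 'n::finite) set \<Rightarrow> complex ^ 'n \<Rightarrow> ereal" where
  "siciak E z = (SUP c\<in>{c. is_mpoly c \<and> mpoly_deg c \<ge> 1 \<and> sup_norm_on E c \<le> 1}.
      ereal (norm (mpoly_eval c z) powr (1 / real (mpoly_deg c))))"

definition ln_ereal :: "ereal \<Rightarrow> ereal" where
  "ln_ereal x = (if x = \<infinity> then \<infinity> else if x \<le> 0 then -\<infinity> else ereal (ln (real_of_ereal x)))"

definition green :: "(complex ^ 'n::finite) set \<Rightarrow> complex ^ 'n \<Rightarrow> ereal" where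
  "green E z = ln_ereal (siciak E z)"

end

theory Submission
  imports Defs
begin

lemma mono_ln_ereal: "mono ln_ereal"
proof
  fix x y :: ereal assume xy: "x \<le> y"
  show "ln_ereal x \<le> ln_ereal y"
  proof (cases y)
    case (real ry)
    show ?thesis
    proof (cases x)
      case (real rx)
      then show ?thesis using xy \<open>y = ereal ry\<close> unfolding ln_ereal_def
        by (auto simp: ln_le_cancel_iff)
    next
      case PInf then show ?thesis using xy \<open>y = ereal ry\<close> by auto
    next
      case MInf then show ?thesis unfolding ln_ereal_def by auto
    qed
  next
    case PInf then show ?thesis unfolding ln_ereal_def by auto
  next
    case MInf then show ?thesis using xy unfolding ln_ereal_def by auto
  qed
qed

lemma mono_ereal_measurable:
  fixes f :: "ereal \<Rightarrow> ereal"
  assumes "mono f"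
  shows "f \<in> borel_measurable borel"
proof (rule borel_measurableI_greater)
  fix y :: ereal
  define S where "S = {x. y < f x}"
  define a where "a = Inf S"
  have "S = {a<..} \<union> ({a} \<inter> S)"
  proof (intro equalityI subsetI)
    fix x assume "x \<in> S"
    then have "a \<le> x" unfolding a_def by (rule Inf_lower)
    then show "x \<in> {a<..} \<union> ({a} \<inter> S)" using \<open>x \<in> S\<close> by auto
  next
    fix x assume "x \<in> {a<..} \<union> ({a} \<inter> S)"
    then consider "a < x" | "x = a" "a \<in> S" by auto
    then show "x \<in> S"
    proof cases
      case 1
      then obtain s where "s \<in> S" "s < x" unfolding a_def by (auto simp: Inf_less_iff)
      then show ?thesis using assms unfolding S_def mono_def
        by (metis less_le_trans less_imp_le mem_Collect_eq)
    qed auto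
  qed
  moreover have "{a<..} \<union> ({a} \<inter> S) \<in> sets borel"
    by (rule sets.Un[OF borel_open[OF open_greaterThan] borel_closed[OF finite_imp_closed]]) auto
  ultimately show "{x \<in> space borel. y < f x} \<in> sets borel" unfolding S_def by simp
qed

lemma space_cpt: "space cpt_space = cpt_sets"
  unfolding cpt_space_def
  by (rule space_measure_of) (auto simp: hausdist_open_sets_def)

lemma open_in_sets: "U \<in> hausdist_open_sets \<Longrightarrow> U \<in> sets cpt_space"
  unfolding cpt_space_def
  by (subst sets_measure_of) (auto simp: hausdist_open_sets_def intro: sigma_sets.Basic)

lemma hd_bound:
  assumes "L \<in> cpt_sets" "x \<in> L"
  shows "infdist x K \<le> hausdist K L"
proof -
  have "compact ((\<lambda>b. infdist b K) ` L)"
    using assms(1) unfolding cpt_sets_def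
    by (intro compact_continuous_image continuous_on_infdist continuous_on_id) auto
  then have "bdd_above ((\<lambda>b. infdist b K) ` L)"
    by (intro bounded_imp_bdd_above compact_imp_bounded)
  then have "infdist x K \<le> (SUP b\<in>L. infdist b K)" using assms(2) by (rule cSUP_upper2) auto
  then show ?thesis unfolding hausdist_def by linarith
qed

lemma eval_bdd:
  assumes "compact K"
  shows "bdd_above ((\<lambda>x. norm (mpoly_eval c x)) ` K)"
proof -
  have cont: "continuous_on K (mpoly_eval c)" unfolding mpoly_eval_def by (intro continuous_intros)
  have "compact ((\<lambda>x. norm (mpoly_eval c x)) ` K)"
    using assms by (intro compact_continuous_image continuous_on_norm cont)
  then show ?thesis by (intro bounded_imp_bdd_above compact_imp_bounded)
qed

lemma scale_facts:
  fixes c :: "('n::finite \<Rightarrow> nat) \<Rightarrow> complex"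
  assumes "t \<noteq> 0"
  shows "{\<alpha>. complex_of_real t * c \<alpha> \<noteq> 0} = {\<alpha>. c \<alpha> \<noteq> 0}"
    and "mpoly_eval (\<lambda>\<alpha>. complex_of_real t * c \<alpha>) x = complex_of_real t * mpoly_eval c x"
    and "mpoly_deg (\<lambda>\<alpha>. complex_of_real t * c \<alpha>) = mpoly_deg c"
    and "is_mpoly c \<Longrightarrow> is_mpoly (\<lambda>\<alpha>. complex_of_real t * c \<alpha>)"
proof -
  show e: "{\<alpha>. complex_of_real t * c \<alpha> \<noteq> 0} = {\<alpha>. c \<alpha> \<noteq> 0}" using assms by auto
  show "mpoly_eval (\<lambda>\<alpha>. complex_of_real t * c \<alpha>) x = complex_of_real t * mpoly_eval c x"
    unfolding mpoly_eval_def e by (simp add: sum_distrib_left mult.assoc)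
  show "mpoly_deg (\<lambda>\<alpha>. complex_of_real t * c \<alpha>) = mpoly_deg c"
    unfolding mpoly_deg_def e ..
  show "is_mpoly c \<Longrightarrow> is_mpoly (\<lambda>\<alpha>. complex_of_real t * c \<alpha>)"
    unfolding is_mpoly_def e .
qed

lemma siciak_open:
  fixes z :: "complex ^ 'n::finite" and a :: ereal
  shows "{E\<in>cpt_sets. a < siciak E z} \<in> hausdist_open_sets"
  unfolding hausdist_open_sets_def
proof (intro CollectI conjI ballI)
  show "{E \<in> cpt_sets. a < siciak E z} \<subseteq> cpt_sets" by auto
  fix K assume "K \<in> {E \<in> cpt_sets. a < siciak E z}"
  then have K: "K \<in> cpt_sets" and aK: "a < siciak K z" by auto
  from K have Kc: "compact K" and Kne: "K \<noteq> {}" unfolding cpt_sets_def by auto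
  from aK obtain c where c: "is_mpoly c" "mpoly_deg c \<ge> 1" "sup_norm_on K c \<le> 1"
    and ac: "a < ereal (norm (mpoly_eval c z) powr (1 / real (mpoly_deg c)))"
    unfolding siciak_def less_SUP_iff by auto
  define d where "d = mpoly_deg c"
  define r where "r = norm (mpoly_eval c z) powr (1 / real d)"
  have dpos: "real d > 0" using c(2) d_def by auto
  have r0: "r \<ge> 0" unfolding r_def by simp
  have ar: "a < ereal r" using ac unfolding r_def d_def .
  obtain s where s: "0 < s" "s < 1" "a < ereal (s * r)"
  proof (cases "r = 0")
    case True
    then have "a < 0" using ar by (simp add: zero_ereal_def)
    then show ?thesis using that[of "1/2"] True by (simp add: zero_ereal_def)
  next
    case False
    then have rp: "r > 0" using r0 by auto
    define b where "b = max 0 (real_of_ereal a)"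
    have ab: "a \<le> ereal b" unfolding b_def using ar by (cases a) auto
    have br: "b < r" unfolding b_def using ar rp by (cases a) auto
    define s where "s = (b / r + 1) / 2"
    have b0: "b \<ge> 0" unfolding b_def by simp
    have q: "b / r < 1" using br rp by simp
    have "b / r \<ge> 0" using b0 rp by simp
    have "s > b / r" unfolding s_def using q by argo
    moreover have "s < 1" unfolding s_def using q by argo
    moreover have "s > 0" unfolding s_def using \<open>b / r \<ge> 0\<close> by argo
    moreover have "b < s * r" using \<open>s > b / r\<close> rp by (simp add: pos_divide_less_eq)
    ultimately have "ereal b < ereal (s * r)" by simp
    then have "a < ereal (s * r)" by (rule order_le_less_trans[OF ab])
    then show ?thesis using that[of s] \<open>s < 1\<close> \<open>s > 0\<close> by blast
  qed
  define t where "t = s ^ d"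
  have t0: "t > 0" "t < 1" unfolding t_def using s dpos by (auto simp: power_less_one_iff)
  have ts: "t powr (1 / real d) = s"
    unfolding t_def using s dpos
    by (simp add: powr_realpow[symmetric] powr_powr)
  define e0 where "e0 = 1 / t - 1"
  have e0: "e0 > 0" unfolding e0_def using t0 by simp
  define C where "C = {x. infdist x K \<le> 1}"
  have Cc: "compact C" unfolding C_def using compact_infdist_le[OF Kne Kc, of 1] by simp
  have cont: "continuous_on C (mpoly_eval c)" unfolding mpoly_eval_def by (intro continuous_intros)
  have "uniformly_continuous_on C (mpoly_eval c)" by (rule compact_uniformly_continuous[OF cont Cc])
  then obtain \<delta> where \<delta>: "\<delta> > 0"
    and uc: "\<And>x y. x \<in> C \<Longrightarrow> y \<in> C \<Longrightarrow> dist y x < \<delta> \<Longrightarrow>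
       dist (mpoly_eval c y) (mpoly_eval c x) < e0"
    unfolding uniformly_continuous_on_def using e0 by metis
  define e where "e = min 1 \<delta>"
  have "e > 0" unfolding e_def using \<delta> by simp
  moreover have "L \<in> {E \<in> cpt_sets. a < siciak E z}" if L: "L \<in> cpt_sets" "hausdist K L < e" for L
  proof -
    have Lne: "L \<noteq> {}" using L unfolding cpt_sets_def by auto
    define c' where "c' = (\<lambda>\<alpha>. complex_of_real t * c \<alpha>)"
    have tne: "t \<noteq> 0" using t0 by simp
    note sf = scale_facts[OF tne, of c]
    have pt: "norm (mpoly_eval c x) < 1 / t" if x: "x \<in> L" for x
    proof -
      have "infdist x K < e" using hd_bound[OF L(1) x, of K] L(2) by linarith
      then obtain y where y: "y \<in> K" "dist x y < e"
        unfolding infdist_notempty[OF Kne]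
        by (subst (asm) cINF_less_iff) (use Kne in \<open>auto intro: bdd_belowI[of _ 0]\<close>)
      have xC: "x \<in> C" unfolding C_def using \<open>infdist x K < e\<close> e_def by simp
      have yC: "y \<in> C" unfolding C_def using y by simp
      have "dist x y < \<delta>" using y e_def by simp
      then have "dist (mpoly_eval c x) (mpoly_eval c y) < e0" using uc[OF yC xC] by simp
      moreover have "norm (mpoly_eval c y) \<le> 1"
      proof -
        have "norm (mpoly_eval c y) \<le> sup_norm_on K c"
          unfolding sup_norm_on_def using y(1) eval_bdd[OF Kc] by (rule cSUP_upper)
        then show ?thesis using c(3) by simp
      qed
      moreover have "norm (mpoly_eval c x) \<le> norm (mpoly_eval c y) + dist (mpoly_eval c x) (mpoly_eval c y)"
        by (metis dist_norm norm_triangle_sub)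
      ultimately show ?thesis unfolding e0_def by linarith
    qed
    have sn: "sup_norm_on L c' \<le> 1"
      unfolding sup_norm_on_def
    proof (rule cSUP_least[OF Lne])
      fix x assume "x \<in> L"
      from pt[OF this] t0 have "t * norm (mpoly_eval c x) < 1"
        by (simp add: field_simps)
      then show "norm (mpoly_eval c' x) \<le> 1"
        unfolding c'_def sf(2) using t0 by (simp add: norm_mult)
    qed
    have mem: "c' \<in> {c. is_mpoly c \<and> mpoly_deg c \<ge> 1 \<and> sup_norm_on L c \<le> 1}"
      using sn c sf unfolding c'_def by auto
    have val: "norm (mpoly_eval c' z) powr (1 / real (mpoly_deg c')) = s * r"
      unfolding c'_def sf(2) sf(3) using t0
      using ts unfolding r_def d_def by (simp add: norm_mult powr_mult)
    have "ereal (s * r) \<le> siciak L z"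
      unfolding siciak_def using mem val by (metis (no_types, lifting) SUP_upper)
    then show ?thesis using s(3) L(1) by auto
  qed
  ultimately show "\<exists>e>0. \<forall>L\<in>cpt_sets. hausdist K L < e \<longrightarrow> L \<in> {E \<in> cpt_sets. a < siciak E z}"
    by blast
qed

theorem theorem6p20:
  fixes M :: "'a measure"
    and K :: "'a \<Rightarrow> (complex ^ 'n::finite) set"
  assumes "K \<in> measurable M cpt_space"
  shows "\<forall>z. (\<lambda>\<omega>. siciak (K \<omega>) z) \<in> borel_measurable M
            \<and> (\<lambda>\<omega>. green (K \<omega>) z) \<in> borel_measurable M"
proof
  fix z :: "complex ^ 'n"
  have m1: "(\<lambda>\<omega>. siciak (K \<omega>) z) \<in> borel_measurable M"
  proof (rule borel_measurableI_greater)
    fix y :: ereal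
    have sp: "\<And>\<omega>. \<omega> \<in> space M \<Longrightarrow> K \<omega> \<in> cpt_sets"
      using measurable_space[OF assms] space_cpt by auto
    have "{x \<in> space M. y < siciak (K x) z} = K -` {E\<in>cpt_sets. y < siciak E z} \<inter> space M"
      using sp by auto
    also have "\<dots> \<in> sets M"
      by (rule measurable_sets[OF assms open_in_sets[OF siciak_open]])
    finally show "{x \<in> space M. y < siciak (K x) z} \<in> sets M" .
  qed
  have "(\<lambda>\<omega>. ln_ereal (siciak (K \<omega>) z)) \<in> borel_measurable M"
    by (rule measurable_compose[OF m1 mono_ereal_measurable[OF mono_ln_ereal]])
  then show "(\<lambda>\<omega>. siciak (K \<omega>) z) \<in> borel_measurable M
            \<and> (\<lambda>\<omega>. green (K \<omega>) z) \<in> borel_measurable M"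
    using m1 unfolding green_def by simp
qed

end
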